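(* Let $d\ge2$, let $\omega$ be any configuration, and let $C^*$ be an open dual cluster. Then \[ \partial B_{C^*}=\bigcup_{e^*\in\Delta C^*}Q_{e^*}, \] where $\partial$ denotes the topological boundary in $\mathbb{R}^d$.
   Context: Dual lattice: vertices $(\mathbb{Z}^d)^*=\mathbb{Z}^d+(1/2,\dots,1/2)$, dual bonds $\langle x^*,y^*\rangle$ with $\|x^*-y^*\|_1=1$. For $x^*\in(\mathbb{Z}^d)^*$, $B_{x^*}=\prod_{i=1}^d[(x^* )_i-1/2,(x^* )_i+1/2]$, and for a dual bond $e^*=\langle x^*,y^*\rangle$, $Q_{e^*}=B_{x^*}\cap B_{y^*}$ (a $(d-1)$-dimensional unit face). Given a configuration in which each dual bond is open or closed, an open dual cluster $C^*$ is a connected component (possibly a single vertex) of the graph of open dual bonds; $B_{C^*}=\bigcup_{x^*\in C^*}B_{x^*}$, and $\Delta C^*$ is the set of dual bonds with exactly one endpoint in $C^*$. *)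

theory Defs
  imports "HOL-Analysis.Analysis"
begin

definition dual_vertices :: "(real^'n) set" where
  "dual_vertices = {x. \<forall>i. x$i - 1/2 \<in> \<int>}"

definition dual_bond :: "real^'n \<Rightarrow> real^'n \<Rightarrow> bool" where
  "dual_bond x y \<longleftrightarrow> x \<in> dual_vertices \<and> y \<in> dual_vertices \<and> (\<Sum>i\<in>UNIV. \<bar>x$i - y$i\<bar>) = 1"

text \<open>A configuration assigns open (True) / closed (False) to each dual bond,
  a bond being represented as the unordered pair {x, y}.\<close>
definition open_dual_adj :: "((real^'n) set \<Rightarrow> bool) \<Rightarrow> real^'n \<Rightarrow> real^'n \<Rightarrow> bool" where
  "open_dual_adj \<omega> x y \<longleftrightarrow> dual_bond x y \<and> \<omega> {x, y}"

definition open_dual_cluster :: "((real^'n) set \<Rightarrow> bool) \<Rightarrow> (real^'n) set \<Rightarrow> bool" where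
  "open_dual_cluster \<omega> C \<longleftrightarrow>
     (\<exists>x\<in>dual_vertices. C = {y. (x, y) \<in> {(a, b). open_dual_adj \<omega> a b}\<^sup>*})"

definition box_of :: "real^'n \<Rightarrow> (real^'n) set" where
  "box_of x = cbox (\<chi> i. x$i - 1/2) (\<chi> i. x$i + 1/2)"

definition face_of_bond :: "real^'n \<Rightarrow> real^'n \<Rightarrow> (real^'n) set" where
  "face_of_bond x y = box_of x \<inter> box_of y"

definition cluster_region :: "(real^'n) set \<Rightarrow> (real^'n) set" where
  "cluster_region C = (\<Union>x\<in>C. box_of x)"

definition edge_boundary :: "(real^'n) set \<Rightarrow> ((real^'n) \<times> (real^'n)) set" where
  "edge_boundary C = {(x, y). dual_bond x y \<and> x \<in> C \<and> y \<notin> C}"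

end

theory Submission
  imports Defs
begin

lemma box_iff: "q \<in> box_of z \<longleftrightarrow> (\<forall>i. \<bar>q$i - z$i\<bar> \<le> 1/2)"
proof -
  have "\<And>i. (z$i - 1/2 \<le> q$i \<and> q$i \<le> z$i + 1/2) \<longleftrightarrow> \<bar>q$i - z$i\<bar> \<le> 1/2" by arith
  then show ?thesis unfolding box_of_def mem_box_cart by simp
qed

lemma half_int_sep:
  fixes a b :: real
  assumes "a - 1/2 \<in> \<int>" "b - 1/2 \<in> \<int>" "a \<noteq> b"
  shows "\<bar>a - b\<bar> \<ge> 1"
proof -
  obtain m where m: "a - 1/2 = of_int m" using assms(1) by (auto elim: Ints_cases)
  obtain n where n: "b - 1/2 = of_int n" using assms(2) by (auto elim: Ints_cases)
  have "m \<noteq> n" using m n assms(3) by auto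
  then have "\<bar>m - n\<bar> \<ge> 1" by linarith
  then have "\<bar>real_of_int m - of_int n\<bar> \<ge> 1" by (metis of_int_1_le_iff of_int_abs of_int_diff)
  then show ?thesis using m n by linarith
qed

lemma coord_gap:
  fixes t :: real
  shows "\<exists>e>0. \<forall>h. h - 1/2 \<in> \<int> \<longrightarrow> \<bar>h - t\<bar> < 1/2 + e \<longrightarrow> \<bar>h - t\<bar> \<le> 1/2"
proof -
  define s where "s = t - 1"
  define e where "e = min ((real_of_int (floor t) + 1 - t)/2) ((s - (real_of_int (ceiling s) - 1))/2)"
  have f1: "real_of_int (floor t) + 1 - t > 0" by linarith
  have f2: "s - (real_of_int (ceiling s) - 1) > 0" by linarith
  have e: "e > 0" unfolding e_def using f1 f2 by simp
  have e1: "e \<le> (real_of_int (floor t) + 1 - t)/2" and e2: "e \<le> (s - (real_of_int (ceiling s) - 1))/2"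
    unfolding e_def by (rule min.cobounded1, rule min.cobounded2)
  have "\<bar>h - t\<bar> \<le> 1/2" if h: "h - 1/2 \<in> \<int>" and lt: "\<bar>h - t\<bar> < 1/2 + e" for h
  proof -
    obtain k where k: "h - 1/2 = of_int k" using h by (auto elim: Ints_cases)
    have "real_of_int k < t + e" using lt k by linarith
    then have "real_of_int k < real_of_int (floor t) + 1" using e1 f1 by (simp add: field_simps)
    then have a: "k \<le> floor t" by linarith
    have "real_of_int k > s - e" using lt k unfolding s_def by linarith
    then have "real_of_int k > real_of_int (ceiling s) - 1" using e2 f2 by (simp add: field_simps)
    then have b: "k \<ge> ceiling s" by linarith
    have "real_of_int k \<le> t" using a by linarith
    moreover have "real_of_int k \<ge> s" using b by linarith
    ultimately show ?thesis using k unfolding s_def by linarith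
  qed
  then show ?thesis using e by blast
qed

lemma local_gap:
  fixes p :: "real^'n"
  shows "\<exists>e>0. \<forall>q w. dist q p < e \<longrightarrow> w \<in> dual_vertices \<longrightarrow> q \<in> box_of w \<longrightarrow> p \<in> box_of w"
proof -
  have "\<forall>i. \<exists>e>0. \<forall>h. h - 1/2 \<in> \<int> \<longrightarrow> \<bar>h - p$i\<bar> < 1/2 + e \<longrightarrow> \<bar>h - p$i\<bar> \<le> 1/2"
    using coord_gap by blast
  then obtain E where E: "\<And>i. E i > 0"
    "\<And>i h. h - 1/2 \<in> \<int> \<Longrightarrow> \<bar>h - p$i\<bar> < 1/2 + E i \<Longrightarrow> \<bar>h - p$i\<bar> \<le> 1/2"
    by metis
  define e where "e = Min (range E)"
  have e: "e > 0" unfolding e_def using E(1) by (simp add: finite_imageI)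
  have eE: "e \<le> E i" for i unfolding e_def by (simp add: finite_imageI)
  have "p \<in> box_of w" if "dist q p < e" "w \<in> dual_vertices" "q \<in> box_of w" for q w
    unfolding box_iff
  proof
    fix i
    have "\<bar>q$i - p$i\<bar> \<le> dist q p"
      by (metis dist_norm component_le_norm_cart vector_minus_component)
    moreover have "\<bar>q$i - w$i\<bar> \<le> 1/2" using that(3) box_iff by blast
    moreover have "w$i - 1/2 \<in> \<int>" using that(2) unfolding dual_vertices_def by blast
    ultimately have "\<bar>w$i - p$i\<bar> \<le> 1/2" using E(2)[of "w$i" i] eE[of i] that(1) by linarith
    then show "\<bar>p$i - w$i\<bar> \<le> 1/2" by linarith
  qed
  then show ?thesis using e by blast
qed

lemma cube_path:
  assumes "x \<in> dual_vertices" "w \<in> dual_vertices" "p \<in> box_of x" "p \<in> box_of w"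
    "x \<in> C" "w \<notin> C"
  shows "\<exists>a b. (a, b) \<in> edge_boundary C \<and> p \<in> face_of_bond a b"
  using assms
proof (induction "card {i. x$i \<noteq> w$i}" arbitrary: x rule: less_induct)
  case less
  have "x \<noteq> w" using less.prems by auto
  then obtain i where i: "x$i \<noteq> w$i" by (metis vec_eq_iff)
  define x' where "x' = (\<chi> j. if j = i then w$i else x$j)"
  have x'i: "x'$j = (if j = i then w$i else x$j)" for j unfolding x'_def by simp
  have dv': "x' \<in> dual_vertices" using less.prems(1,2) unfolding dual_vertices_def by (auto simp: x'i)
  have pb': "p \<in> box_of x'" using less.prems(3,4) unfolding box_iff x'i by auto
  have "\<bar>x$i - w$i\<bar> \<ge> 1"
    using half_int_sep[of "x$i" "w$i"] less.prems(1,2) i unfolding dual_vertices_def by blast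
  moreover have "\<bar>x$i - w$i\<bar> \<le> 1"
  proof -
    have "\<bar>p$i - x$i\<bar> \<le> 1/2" "\<bar>p$i - w$i\<bar> \<le> 1/2" using less.prems(3,4) box_iff by blast+
    then show ?thesis by linarith
  qed
  ultimately have one: "\<bar>x$i - w$i\<bar> = 1" by simp
  have "(\<Sum>j\<in>UNIV. \<bar>x$j - x'$j\<bar>) = (\<Sum>j\<in>UNIV. if j = i then \<bar>x$i - w$i\<bar> else 0)"
    by (rule sum.cong) (auto simp: x'i)
  also have "\<dots> = 1" using one by simp
  finally have db: "dual_bond x x'" unfolding dual_bond_def using less.prems(1) dv' by simp
  show ?case
  proof (cases "x' \<in> C")
    case False
    then have "(x, x') \<in> edge_boundary C" unfolding edge_boundary_def using db less.prems(5) by simp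
    moreover have "p \<in> face_of_bond x x'" unfolding face_of_bond_def using less.prems(3) pb' by simp
    ultimately show ?thesis by blast
  next
    case True
    have eq: "{j. x'$j \<noteq> w$j} = {j. x$j \<noteq> w$j} - {i}" by (auto simp: x'i)
    have "card {j. x'$j \<noteq> w$j} < card {j. x$j \<noteq> w$j}"
      unfolding eq by (rule card_Diff1_less) (use i in auto)
    then show ?thesis using less.hyps[of x'] dv' less.prems(2,4,6) pb' True by blast
  qed
qed

lemma not_interior:
  assumes "C \<subseteq> dual_vertices" "y \<in> dual_vertices" "y \<notin> C" "p \<in> box_of y"
  shows "p \<notin> interior (cluster_region C)"
proof
  assume "p \<in> interior (cluster_region C)"
  then obtain e where e: "e > 0" "ball p e \<subseteq> cluster_region C" by (auto simp: mem_interior)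
  define t where "t = min (1/2) (e / (2 * (norm (y - p) + 1)))"
  have "2 * (norm (y - p) + 1) > 0" by (smt (verit) norm_ge_zero)
  then have t1: "t > 0" unfolding t_def using e by auto
  have t2: "t \<le> 1/2" unfolding t_def by (rule min.cobounded1)
  note t = t1 t2
  define q where "q = p + t *\<^sub>R (y - p)"
  have "dist q p = t * norm (y - p)" unfolding q_def dist_norm using t by simp
  also have "\<dots> \<le> (e / (2 * (norm (y - p) + 1))) * norm (y - p)"
    by (rule mult_right_mono) (auto simp: t_def)
  also have "\<dots> = e * (norm (y - p) / (2 * (norm (y - p) + 1)))" by simp
  also have "\<dots> < e * 1"
  proof (rule mult_strict_left_mono[OF _ e(1)])
    have D: "0 < 2 * (norm (y - p) + 1)" by (smt (verit) norm_ge_zero)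
    then show "norm (y - p) / (2 * (norm (y - p) + 1)) < 1" by (simp add: divide_less_eq)
  qed
  also have "\<dots> = e" by simp
  finally have "q \<in> ball p e" by (simp add: dist_commute)
  then have "q \<in> cluster_region C" using e by blast
  then obtain z where z: "z \<in> C" "q \<in> box_of z" unfolding cluster_region_def by blast
  have qy: "\<bar>q$i - y$i\<bar> < 1/2" for i
  proof -
    have "q$i - y$i = (1 - t) * (p$i - y$i)" unfolding q_def by (simp add: algebra_simps)
    moreover have "\<bar>p$i - y$i\<bar> \<le> 1/2" using assms(4) box_iff by blast
    ultimately have "\<bar>q$i - y$i\<bar> = (1 - t) * \<bar>p$i - y$i\<bar>" using t by (simp add: abs_mult)
    also have "\<dots> \<le> (1 - t) * (1/2)"
      using \<open>\<bar>p$i - y$i\<bar> \<le> 1/2\<close> t by (intro mult_left_mono) auto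
    finally show ?thesis using t by simp
  qed
  have "z \<noteq> y" using z assms(3) by auto
  then obtain i where i: "z$i \<noteq> y$i" by (metis vec_eq_iff)
  have "\<bar>z$i - y$i\<bar> \<ge> 1"
    using half_int_sep[of "z$i" "y$i"] assms(1,2) z(1) i unfolding dual_vertices_def by blast
  moreover have "\<bar>q$i - z$i\<bar> \<le> 1/2" using z(2) box_iff by blast
  ultimately show False using qy[of i] by linarith
qed

lemma some_box:
  fixes q :: "real^'n"
  shows "\<exists>w\<in>dual_vertices. q \<in> box_of w"
proof -
  define w :: "real^'n" where "w = (\<chi> i. real_of_int (floor (q$i)) + 1/2)"
  have "w \<in> dual_vertices" unfolding dual_vertices_def w_def by simp
  moreover have "q \<in> box_of w" unfolding box_iff w_def
  proof
    fix i
    have "real_of_int (floor (q$i)) \<le> q$i" "q$i < real_of_int (floor (q$i)) + 1" by simp_all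
    then have "\<bar>q$i - (real_of_int (floor (q$i)) + 1/2)\<bar> \<le> 1/2"
      by (auto simp: abs_le_iff field_simps)
    then show "\<bar>q$i - (\<chi> i. real_of_int (floor (q$i)) + 1/2)$i\<bar> \<le> 1/2" by simp
  qed
  ultimately show ?thesis by blast
qed

theorem lemma3p2:
  fixes \<omega> :: "(real^'n) set \<Rightarrow> bool" and C :: "(real^'n) set"
  assumes "CARD('n) \<ge> 2"
    and "open_dual_cluster \<omega> C"
  shows "frontier (cluster_region C) = (\<Union>(x, y)\<in>edge_boundary C. face_of_bond x y)"
proof -
  obtain x0 where x0: "x0 \<in> dual_vertices"
    "C = {y. (x0, y) \<in> {(a, b). open_dual_adj \<omega> a b}\<^sup>*}"
    using assms(2) unfolding open_dual_cluster_def by blast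
  have CD: "C \<subseteq> dual_vertices"
  proof
    fix y assume "y \<in> C"
    then have "(x0, y) \<in> {(a, b). open_dual_adj \<omega> a b}\<^sup>*" using x0 by blast
    then show "y \<in> dual_vertices"
    proof (cases rule: rtranclE)
      case base
      then show ?thesis using x0(1) by simp
    next
      case (step a)
      then show ?thesis by (simp add: open_dual_adj_def dual_bond_def)
    qed
  qed
  have cl: "p \<in> cluster_region C" if "p \<in> closure (cluster_region C)" for p
  proof -
    obtain e where e: "e > 0" "\<And>q w. dist q p < e \<Longrightarrow> w \<in> dual_vertices \<Longrightarrow> q \<in> box_of w \<Longrightarrow> p \<in> box_of w"
      using local_gap[of p] by blast
    have "\<exists>q\<in>cluster_region C. dist q p < e" using that e(1) unfolding closure_approachable by blast
    then obtain q where q: "q \<in> cluster_region C" "dist q p < e" by blast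
    then obtain z where z: "z \<in> C" "q \<in> box_of z" unfolding cluster_region_def by blast
    have "z \<in> dual_vertices" using CD z(1) by blast
    then have "p \<in> box_of z" using e(2)[OF q(2) _ z(2)] by simp
    then show ?thesis using z(1) unfolding cluster_region_def by blast
  qed
  show ?thesis
  proof
    show "frontier (cluster_region C) \<subseteq> (\<Union>(x, y)\<in>edge_boundary C. face_of_bond x y)"
    proof
      fix p assume p: "p \<in> frontier (cluster_region C)"
      then have "p \<in> cluster_region C" using cl unfolding frontier_def by blast
      then obtain x where x: "x \<in> C" "p \<in> box_of x" unfolding cluster_region_def by blast
      obtain e where e: "e > 0" "\<And>q w. dist q p < e \<Longrightarrow> w \<in> dual_vertices \<Longrightarrow> q \<in> box_of w \<Longrightarrow> p \<in> box_of w"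
        using local_gap[of p] by blast
      have "p \<notin> interior (cluster_region C)" using p unfolding frontier_def by blast
      then have "\<not> ball p e \<subseteq> cluster_region C" using e(1) by (auto simp: mem_interior)
      then obtain q where q: "dist p q < e" "q \<notin> cluster_region C"
        unfolding subset_iff mem_ball by blast
      obtain w where w: "w \<in> dual_vertices" "q \<in> box_of w" using some_box by blast
      have "w \<notin> C" using q(2) w(2) unfolding cluster_region_def by blast
      moreover have "p \<in> box_of w" using e(2)[of q w] q(1) w by (simp add: dist_commute)
      moreover have "x \<in> dual_vertices" using CD x(1) by blast
      ultimately obtain a b where "(a, b) \<in> edge_boundary C" "p \<in> face_of_bond a b"
        using cube_path[of x w p C] x w by blast
      then show "p \<in> (\<Union>(x, y)\<in>edge_boundary C. face_of_bond x y)" by blast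
    qed
  next
    show "(\<Union>(x, y)\<in>edge_boundary C. face_of_bond x y) \<subseteq> frontier (cluster_region C)"
    proof
      fix p assume "p \<in> (\<Union>(x, y)\<in>edge_boundary C. face_of_bond x y)"
      then obtain x y where xy: "(x, y) \<in> edge_boundary C" "p \<in> face_of_bond x y" by blast
      then have xy': "dual_bond x y" "x \<in> C" "y \<notin> C" "p \<in> box_of x" "p \<in> box_of y"
        by (simp_all add: edge_boundary_def face_of_bond_def)
      have "p \<in> cluster_region C" using xy' unfolding cluster_region_def by blast
      then have "p \<in> closure (cluster_region C)" using closure_subset by blast
      moreover have "p \<notin> interior (cluster_region C)"
      proof -
        have "y \<in> dual_vertices" using xy'(1) unfolding dual_bond_def by blast
        then show ?thesis using not_interior[OF CD _ xy'(3) xy'(5)] by blast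
      qed
      ultimately show "p \<in> frontier (cluster_region C)" unfolding frontier_def by blast
    qed
  qed
qed

end
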